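(* There exist $b_1,b_2\in L^\infty_{loc}(\mathbb{R})$ such that $C_bH=[b_2,[b_1,H]]$ is bounded on $L^2(\mathbb{R})$, but $S_{A,B}(b_1,b_2)=\infty$ and $T_C(b_1,b_2)=\infty$ for all log-bumps $A,B,C$ with $\bar A,\bar B,\bar C\in B_2$.
   Context: $H$ is the Hilbert transform $Hf(x)=\lim_{\varepsilon\to0}\int_{|x-y|>\varepsilon}\frac{f(y)}{x-y}dy$; $[A,B]=AB-BA$ with $b_i$ acting by multiplication; the commutator is defined on $L^\infty_c$ and bounded on $L^2$ means $\|C_bHf\|_2\le K\|f\|_2$ for $f\in L^\infty_c$. A log-bump is a function $\Phi(t)=t^p\log(e+t)^{p-1+\delta}$ on $[0,\infty)$ with $p\in(1,\infty)$, $\delta\in(0,\infty)$ (a Young function). For a Young function $A$: $\bar A(t)=\sup_{s>0}\{st-A(s)\}$; $A\in B_2$ means $\int_1^\infty\frac{A(t)}{t^2}\frac{dt}{t}<\infty$; $\langle|f|\rangle_{A,I}=\inf\{\lambda>0:\frac1{|I|}\int_IA(|f|/\lambda)\le1\}$. With $\langle g\rangle_I=\frac1{|I|}\int_Ig$ and suprema over intervals $I$: $S_{A,B}(b_1,b_2)=\sup_I\langle|b_1-\langle b_1\rangle_I|\rangle_{A,I}\langle|b_2-\langle b_2\rangle_I|\rangle_{B,I}$, $T_C(b_1,b_2)=\sup_I\langle|b_1-\langle b_1\rangle_I||b_2-\langle b_2\rangle_I|\rangle_{C,I}$. *)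

theory Defs
  imports "HOL-Analysis.Analysis"
begin

definition hilbert :: "(real \<Rightarrow> real) \<Rightarrow> real \<Rightarrow> real" where
  "hilbert f x = Lim (at_right 0)
     (\<lambda>\<epsilon>. LINT y:{y. \<epsilon> < \<bar>x - y\<bar>}|lborel. f y / (x - y))"

definition commutator ::
  "(real \<Rightarrow> real) \<Rightarrow> ((real \<Rightarrow> real) \<Rightarrow> real \<Rightarrow> real) \<Rightarrow> (real \<Rightarrow> real) \<Rightarrow> real \<Rightarrow> real" where
  "commutator b T f = (\<lambda>x. b x * T f x - T (\<lambda>y. b y * f y) x)"

definition Linf_c :: "(real \<Rightarrow> real) \<Rightarrow> bool" where
  "Linf_c f \<longleftrightarrow> f \<in> borel_measurable lborel \<and>
     (\<exists>M. AE x in lborel. \<bar>f x\<bar> \<le> M) \<and>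
     (\<exists>K. compact K \<and> (AE x in lborel. x \<notin> K \<longrightarrow> f x = 0))"

definition Linf_loc :: "(real \<Rightarrow> real) \<Rightarrow> bool" where
  "Linf_loc b \<longleftrightarrow> b \<in> borel_measurable lborel \<and>
     (\<forall>K. compact K \<longrightarrow> (\<exists>M. AE x in lborel. x \<in> K \<longrightarrow> \<bar>b x\<bar> \<le> M))"

definition L2_bounded_on_Linf_c :: "((real \<Rightarrow> real) \<Rightarrow> real \<Rightarrow> real) \<Rightarrow> bool" where
  "L2_bounded_on_Linf_c T \<longleftrightarrow> (\<exists>K\<ge>0. \<forall>f. Linf_c f \<longrightarrow>
     (\<integral>\<^sup>+ x. ennreal ((T f x)\<^sup>2) \<partial>lborel) \<le> ennreal (K\<^sup>2) * (\<integral>\<^sup>+ x. ennreal ((f x)\<^sup>2) \<partial>lborel))"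

definition log_bump :: "(real \<Rightarrow> real) \<Rightarrow> bool" where
  "log_bump \<Phi> \<longleftrightarrow> (\<exists>p \<delta>. 1 < p \<and> 0 < \<delta> \<and>
     (\<forall>t\<ge>0. \<Phi> t = t powr p * ln (exp 1 + t) powr (p - 1 + \<delta>)))"

text \<open>Complementary Young function  bar A (t) = sup_{s>0} (s t - A s).
  (For log-bumps this set is bounded above, so the real supremum is the true one.)\<close>
definition young_conj :: "(real \<Rightarrow> real) \<Rightarrow> real \<Rightarrow> real" where
  "young_conj A t = (SUP s\<in>{0<..}. s * t - A s)"

definition B2 :: "(real \<Rightarrow> real) \<Rightarrow> bool" where
  "B2 A \<longleftrightarrow> (\<integral>\<^sup>+ t\<in>{1..}. ennreal (A t / t\<^sup>2 / t) \<partial>lborel) < \<infinity>"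

definition avg :: "(real \<Rightarrow> real) \<Rightarrow> real \<Rightarrow> real \<Rightarrow> real" where
  "avg g a b = (LINT x:{a..b}|lborel. g x) / (b - a)"

definition orlicz_avg :: "(real \<Rightarrow> real) \<Rightarrow> (real \<Rightarrow> real) \<Rightarrow> real \<Rightarrow> real \<Rightarrow> ereal" where
  "orlicz_avg A g a b = Inf {ereal l | l. 0 < l \<and>
     (\<integral>\<^sup>+ x\<in>{a..b}. ennreal (A (\<bar>g x\<bar> / l)) \<partial>lborel) \<le> ennreal (b - a)}"

definition S_AB :: "(real \<Rightarrow> real) \<Rightarrow> (real \<Rightarrow> real) \<Rightarrow> (real \<Rightarrow> real) \<Rightarrow> (real \<Rightarrow> real) \<Rightarrow> ereal" where
  "S_AB A B b1 b2 = (SUP I\<in>{(a, b). a < b}. case I of (a, b) \<Rightarrow>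
     orlicz_avg A (\<lambda>x. b1 x - avg b1 a b) a b * orlicz_avg B (\<lambda>x. b2 x - avg b2 a b) a b)"

definition T_C :: "(real \<Rightarrow> real) \<Rightarrow> (real \<Rightarrow> real) \<Rightarrow> (real \<Rightarrow> real) \<Rightarrow> ereal" where
  "T_C C b1 b2 = (SUP I\<in>{(a, b). a < b}. case I of (a, b) \<Rightarrow>
     orlicz_avg C (\<lambda>x. \<bar>b1 x - avg b1 a b\<bar> * \<bar>b2 x - avg b2 a b\<bar>) a b)"

end

theory Submission
  imports Defs "HOL-Real_Asymp.Real_Asymp"
begin


lemma refl_int:
  fixes c :: real assumes c: "0 < c"
  shows "(\<integral>\<^sup>+ y. ennreal (1 / (c - y)\<^sup>2) * indicator {..0} y \<partial>lborel) = ennreal (1 / c)"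
proof -
  have m: "(\<lambda>y::real. ennreal (1 / (c - y)\<^sup>2) * indicator {..0} y) \<in> borel_measurable borel"
    by measurable
  have "(\<integral>\<^sup>+ y. ennreal (1 / (c - y)\<^sup>2) * indicator {..0} y \<partial>lborel)
      = (\<integral>\<^sup>+ y. ennreal (1 / (c - (0 + -1 * y))\<^sup>2) * indicator {..0} (0 + -1 * y) \<partial>lborel)"
    using nn_integral_real_affine[OF m, of "-1" 0] by simp
  also have "\<dots> = (\<integral>\<^sup>+ y. ennreal (1 / (c + y)\<^sup>2) * indicator {0..} y \<partial>lborel)"
    by (auto intro!: nn_integral_cong simp: indicator_def)
  also have "\<dots> = ennreal (0 - (- 1 / (c + 0)))"
  proof (rule nn_integral_FTC_atLeast)
    show "(\<lambda>y. 1 / (c + y)\<^sup>2) \<in> borel_measurable borel" by measurable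
    show "((\<lambda>y. - 1 / (c + y)) has_real_derivative 1 / (c + x)\<^sup>2) (at x)" if "0 \<le> x" for x
      using that c by (auto intro!: derivative_eq_intros simp: power2_eq_square field_simps)
    show "0 \<le> 1 / (c + x)\<^sup>2" for x by simp
    show "((\<lambda>y. - 1 / (c + y)) \<longlongrightarrow> 0) at_top" by real_asymp
  qed
  also have "\<dots> = ennreal (1 / c)" by simp
  finally show ?thesis .
qed

lemma hilbert_far:
  assumes "\<And>y. \<bar>x - y\<bar> < 1 \<Longrightarrow> g y = 0"
  shows "hilbert g x = (LINT y|lborel. g y / (x - y))"
proof -
  have ev: "\<forall>\<^sub>F e in at_right (0::real). (LINT y:{y. e < \<bar>x - y\<bar>}|lborel. g y / (x - y)) = (LINT y|lborel. g y / (x - y))"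
    using eventually_at_right_real[of 0 1, OF zero_less_one]
  proof (rule eventually_mono)
    fix e :: real assume e: "e \<in> {0<..<1}"
    have eq: "(\<lambda>y. indicator {y. e < \<bar>x - y\<bar>} y *\<^sub>R (g y / (x - y))) = (\<lambda>y. g y / (x - y))"
    proof
      fix y show "indicator {y. e < \<bar>x - y\<bar>} y *\<^sub>R (g y / (x - y)) = g y / (x - y)"
        using e assms[of y] by (cases "e < \<bar>x - y\<bar>") auto
    qed
    show "(LINT y:{y. e < \<bar>x - y\<bar>}|lborel. g y / (x - y)) = (LINT y|lborel. g y / (x - y))"
      unfolding set_lebesgue_integral_def eq by (rule refl)
  qed
  show ?thesis unfolding hilbert_def
    by (rule tendsto_Lim[OF _ tendsto_eventually[OF ev]]) simp
qed


lemma ln_e_ge1: "0 \<le> (t::real) \<Longrightarrow> 1 \<le> ln (exp 1 + t)"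
proof -
  assume t: "0 \<le> t"
  have "ln (exp 1) \<le> ln (exp 1 + t)" using t by (subst ln_le_cancel_iff) (auto intro: add_pos_nonneg)
  then show ?thesis by simp
qed

lemma lb_ge_powr:
  fixes A :: "real \<Rightarrow> real"
  assumes A: "\<forall>t\<ge>0. A t = t powr p * ln (exp 1 + t) powr (p - 1 + \<delta>)"
    and p: "1 < p" and d: "0 < \<delta>" and t: "0 \<le> t"
  shows "t powr p \<le> A t"
proof -
  have "1 \<le> ln (exp 1 + t) powr (p - 1 + \<delta>)"
    using ln_e_ge1[OF t] p d by (intro ge_one_powr_ge_zero) auto
  then have "t powr p * 1 \<le> t powr p * ln (exp 1 + t) powr (p - 1 + \<delta>)"
    by (intro mult_left_mono) auto
  then show ?thesis using A t by simp
qed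

lemma young_bdd:
  fixes A :: "real \<Rightarrow> real" and t :: real
  assumes A: "\<forall>t\<ge>0. A t = t powr p * ln (exp 1 + t) powr (p - 1 + \<delta>)"
    and p: "1 < p" and d: "0 < \<delta>"
  shows "bdd_above ((\<lambda>s. s * t - A s) ` {0<..})"
proof -
  define S0 where "S0 = max 1 ((\<bar>t\<bar> + 1) powr (1 / (p - 1)))"
  have "s * t - A s \<le> S0 * \<bar>t\<bar>" if s: "0 < s" for s
  proof -
    have As: "s powr p \<le> A s" using lb_ge_powr[OF A p d] s by simp
    have "0 \<le> s powr p" by simp
    show ?thesis
    proof (cases "s \<le> S0")
      case True
      have "s * t \<le> s * \<bar>t\<bar>" using s by (intro mult_left_mono) auto
      also have "\<dots> \<le> S0 * \<bar>t\<bar>" using True by (intro mult_right_mono) auto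
      finally show ?thesis using As \<open>0 \<le> s powr p\<close> by linarith
    next
      case False
      then have s1: "1 < s" and sS: "(\<bar>t\<bar> + 1) powr (1 / (p - 1)) < s" unfolding S0_def by auto
      have "((\<bar>t\<bar> + 1) powr (1 / (p - 1))) powr (p - 1) < s powr (p - 1)"
        using sS p by (intro powr_less_mono2) auto
      also have "((\<bar>t\<bar> + 1) powr (1 / (p - 1))) powr (p - 1) = \<bar>t\<bar> + 1"
        using p by (simp add: powr_powr)
      finally have lt: "\<bar>t\<bar> + 1 < s powr (p - 1)" .
      have "s * t \<le> s * (\<bar>t\<bar> + 1)" using s by (intro mult_left_mono) auto
      also have "\<dots> \<le> s * s powr (p - 1)" using s lt by (intro mult_left_mono) auto
      also have "\<dots> = s powr p" using s by (simp add: powr_mult_base)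
      finally show ?thesis using As by (smt (verit) S0_def abs_ge_zero max.cobounded1 mult_nonneg_nonneg)
    qed
  qed
  then show ?thesis by (auto intro!: bdd_aboveI2)
qed

lemma integral_inv_infinite:
  assumes t0: "1 \<le> t0"
  shows "(\<integral>\<^sup>+ t. ennreal (1 / (2 * t)) * indicator {t0..} t \<partial>lborel) = \<infinity>"
proof (rule ccontr)
  let ?I = "(\<integral>\<^sup>+ t. ennreal (1 / (2 * t)) * indicator {t0..} t \<partial>lborel)"
  assume "?I \<noteq> \<infinity>"
  then obtain r where r: "?I = ennreal r" "0 \<le> r"
    using less_top_ennreal top.not_eq_extremum by auto
  define b where "b = t0 * exp (2 * r + 2)"
  have b: "t0 \<le> b" unfolding b_def using t0 r(2) by (simp add: mult_le_cancel_left1 one_le_exp_iff)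
  have "(\<integral>\<^sup>+ t. ennreal (1 / (2 * t)) * indicator {t0..b} t \<partial>lborel) = ennreal (ln b / 2 - ln t0 / 2)"
  proof (rule nn_integral_FTC_Icc)
    show "(\<lambda>t::real. 1 / (2 * t)) \<in> borel_measurable borel" by measurable
    show "((\<lambda>t. ln t / 2) has_real_derivative 1 / (2 * x)) (at x)" if "x \<in> {t0..b}" for x
      using that t0 by (auto intro!: derivative_eq_intros)
    show "0 \<le> 1 / (2 * x)" if "x \<in> {t0..b}" for x using that t0 by auto
  qed (use b in auto)
  also have "ln b / 2 - ln t0 / 2 = r + 1"
    unfolding b_def using t0 by (simp add: ln_mult field_simps)
  finally have eq: "(\<integral>\<^sup>+ t. ennreal (1 / (2 * t)) * indicator {t0..b} t \<partial>lborel) = ennreal (r + 1)" .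
  have "(\<integral>\<^sup>+ t. ennreal (1 / (2 * t)) * indicator {t0..b} t \<partial>lborel) \<le> ?I"
    by (intro nn_integral_mono) (auto simp: indicator_def)
  then have "ennreal (r + 1) \<le> ennreal r" using eq r by simp
  then show False using r by (simp add: ennreal_le_iff)
qed

lemma bump_lower:
  assumes lb: "log_bump A" and B: "B2 (young_conj A)"
  shows "\<forall>x\<ge>1. x\<^sup>2 * ln (exp 1 + x) \<le> A x"
proof -
  obtain p \<delta> where p: "1 < p" and d: "0 < \<delta>" and A: "\<forall>t\<ge>0. A t = t powr p * ln (exp 1 + t) powr (p - 1 + \<delta>)"
    using lb unfolding log_bump_def by blast
  show ?thesis
  proof (cases "2 \<le> p")
    case True
    show ?thesis
    proof (intro allI impI)
      fix x :: real assume x: "1 \<le> x"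
      have L: "1 \<le> ln (exp 1 + x)" using ln_e_ge1 x by simp
      have "x\<^sup>2 = x powr 2" using x by (simp add: powr_numeral)
      also have "\<dots> \<le> x powr p" using x True by (intro powr_mono) auto
      finally have 1: "x\<^sup>2 \<le> x powr p" .
      have "ln (exp 1 + x) = ln (exp 1 + x) powr 1" using L by simp
      also have "\<dots> \<le> ln (exp 1 + x) powr (p - 1 + \<delta>)" using L True d by (intro powr_mono) auto
      finally have 2: "ln (exp 1 + x) \<le> ln (exp 1 + x) powr (p - 1 + \<delta>)" .
      have "x\<^sup>2 * ln (exp 1 + x) \<le> x powr p * ln (exp 1 + x) powr (p - 1 + \<delta>)"
        using 1 2 L by (intro mult_mono) auto
      then show "x\<^sup>2 * ln (exp 1 + x) \<le> A x" using A x by simp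
    qed
  next
    case False
    then have p2: "p < 2" by simp
    have "((\<lambda>t::real. t powr p * ln(exp 1 + t) powr (p - 1 + \<delta>) / t^2) \<longlongrightarrow> 0) at_top"
      using p2 by real_asymp
    then have "\<forall>\<^sub>F t in at_top. t powr p * ln(exp 1 + t) powr (p - 1 + \<delta>) / t^2 < 1/2"
      by (rule order_tendstoD) simp
    then obtain t1 where t1: "\<And>t. t \<ge> t1 \<Longrightarrow> t powr p * ln(exp 1 + t) powr (p - 1 + \<delta>) / t^2 < 1/2"
      by (auto simp: eventually_at_top_linorder)
    define t0 where "t0 = max 1 t1"
    have t0: "1 \<le> t0" unfolding t0_def by simp
    have Y: "t\<^sup>2 / 2 \<le> young_conj A t" if t: "t0 \<le> t" for t
    proof -
      have tpos: "0 < t" using t t0 by simp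
      have "A t / t^2 < 1/2" using t1[of t] t A tpos unfolding t0_def by simp
      then have "A t < t^2 / 2" using tpos by (simp add: field_simps)
      moreover have "t * t - A t \<le> young_conj A t"
        unfolding young_conj_def using tpos by (intro cSUP_upper young_bdd[OF A p d]) auto
      ultimately show ?thesis by (simp add: power2_eq_square)
    qed
    have "(\<integral>\<^sup>+ t. ennreal (1 / (2 * t)) * indicator {t0..} t \<partial>lborel)
        \<le> (\<integral>\<^sup>+ t\<in>{1..}. ennreal (young_conj A t / t\<^sup>2 / t) \<partial>lborel)"
    proof (intro nn_integral_mono)
      fix t :: real
      show "ennreal (1 / (2 * t)) * indicator {t0..} t \<le> ennreal (young_conj A t / t\<^sup>2 / t) * indicator {1..} t"
      proof (cases "t0 \<le> t")
        case True
        then have tp: "0 < t" using t0 by simp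
        have "1 / (2 * t) = (t\<^sup>2 / 2) / t\<^sup>2 / t" using tp by (simp add: field_simps power2_eq_square)
        also have "\<dots> \<le> young_conj A t / t\<^sup>2 / t" using Y[OF True] tp
          by (intro divide_right_mono) auto
        finally show ?thesis using True t0 by (auto intro: ennreal_leI)
      qed simp
    qed
    then have "B2 (young_conj A) \<Longrightarrow> False"
      unfolding B2_def using integral_inv_infinite[OF t0] by (simp add: top_unique)
    then show ?thesis using B by blast
  qed
qed


lemma phi_mono:
  fixes u v :: real assumes "1 \<le> u" "u \<le> v"
  shows "u\<^sup>2 * ln (exp 1 + u) \<le> v\<^sup>2 * ln (exp 1 + v)"
proof -
  have "u\<^sup>2 \<le> v\<^sup>2" using assms by (intro power_mono) auto
  moreover have "ln (exp 1 + u) \<le> ln (exp 1 + v)"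
    using assms by (subst ln_le_cancel_iff) (auto intro: add_pos_nonneg)
  moreover have "0 \<le> ln (exp 1 + u)" using assms by (intro ln_ge_zero) (smt (verit) exp_ge_zero)
  ultimately show ?thesis by (intro mult_mono) auto
qed

lemma orlicz_lower:
  fixes A g :: "real \<Rightarrow> real"
  assumes Alow: "\<forall>x\<ge>1. x\<^sup>2 * ln (exp 1 + x) \<le> A x"
    and G: "G \<in> sets lborel" "G \<subseteq> {a..b}" "emeasure lborel G = ennreal \<mu>" "0 \<le> \<mu>"
    and gm: "\<forall>x\<in>G. m \<le> \<bar>g x\<bar>"
    and M: "0 < M" "M \<le> m" and ab: "a < b"
    and big: "b - a < (m / M)\<^sup>2 * ln (exp 1 + m / M) * \<mu>"
  shows "ereal M \<le> orlicz_avg A g a b"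
  unfolding orlicz_avg_def
proof (rule Inf_greatest, clarify)
  fix l :: real
  assume l: "0 < l" and I: "(\<integral>\<^sup>+ x\<in>{a..b}. ennreal (A (\<bar>g x\<bar> / l)) \<partial>lborel) \<le> ennreal (b - a)"
  show "ereal M \<le> ereal l"
  proof (rule ccontr)
    assume "\<not> ereal M \<le> ereal l"
    then have lM: "l < M" by simp
    define Q where "Q = (m / M)\<^sup>2 * ln (exp 1 + m / M)"
    have mM: "1 \<le> m / M" using M by simp
    have Q0: "0 \<le> Q" unfolding Q_def using mM by (intro mult_nonneg_nonneg ln_ge_zero) (auto intro: add_increasing)
    have pt: "Q \<le> A (\<bar>g x\<bar> / l)" if x: "x \<in> G" for x
    proof -
      have "m / M \<le> m / l" using M l lM by (intro divide_left_mono) auto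
      also have "\<dots> \<le> \<bar>g x\<bar> / l" using gm x l by (intro divide_right_mono) auto
      finally have le: "m / M \<le> \<bar>g x\<bar> / l" .
      have "Q \<le> (\<bar>g x\<bar> / l)\<^sup>2 * ln (exp 1 + \<bar>g x\<bar> / l)"
        unfolding Q_def by (rule phi_mono[OF mM le])
      also have "\<dots> \<le> A (\<bar>g x\<bar> / l)" using Alow mM le by auto
      finally show ?thesis .
    qed
    have "(\<integral>\<^sup>+ x. ennreal Q * indicator G x \<partial>lborel) \<le> (\<integral>\<^sup>+ x\<in>{a..b}. ennreal (A (\<bar>g x\<bar> / l)) \<partial>lborel)"
    proof (intro nn_integral_mono)
      fix x show "ennreal Q * indicator G x \<le> ennreal (A (\<bar>g x\<bar> / l)) * indicator {a..b} x"
      proof (cases "x \<in> G")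
        case True
        then have "x \<in> {a..b}" using G(2) by blast
        then show ?thesis using True pt[of x] by (simp add: ennreal_leI)
      qed simp
    qed
    also have "\<dots> \<le> ennreal (b - a)" by (rule I)
    finally have "ennreal Q * ennreal \<mu> \<le> ennreal (b - a)"
      using G(1,3) by (simp add: nn_integral_cmult_indicator)
    then have "Q * \<mu> \<le> b - a" using Q0 G(4) ab by (simp add: ennreal_mult'[symmetric] ennreal_le_iff)
    then show False using big unfolding Q_def by simp
  qed
qed


definition uu :: "nat \<Rightarrow> real" where "uu n = real n + 1"
definition KK :: "nat \<Rightarrow> real" where "KK n = 72 * (uu n)\<^sup>2 * 2 ^ n + 1"
definition EE :: "nat \<Rightarrow> real" where "EE n = exp (KK n)"
definition hh :: "nat \<Rightarrow> real" where "hh n = 6 * uu n * EE n"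
definition aa :: "nat \<Rightarrow> real" where "aa n = (hh n)\<^sup>2 * 2 ^ n"
definition PP :: "nat \<Rightarrow> real set" where "PP n = {aa n ..< aa n + 1}"
definition bb1 :: "real \<Rightarrow> real" where "bb1 x = (\<Sum>m. hh m * indicator (PP m) x)"
definition bb2 :: "real \<Rightarrow> real" where "bb2 x = indicator {..0} x"

lemma uu_ge: "1 \<le> uu n" unfolding uu_def by simp
lemma KK_pos: "0 < KK n" unfolding KK_def by (intro add_nonneg_pos) auto
lemma EE_gt: "1 < EE n" unfolding EE_def using KK_pos by simp
lemma hh_ge: "6 \<le> hh n"
proof -
  have "6 * 1 * 1 \<le> 6 * uu n * EE n" using uu_ge[of n] EE_gt[of n]
    by (intro mult_mono) auto
  then show ?thesis unfolding hh_def by simp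
qed
lemma hh_pos: "0 < hh n" using hh_ge[of n] by simp
lemma aa_ge: "36 \<le> aa n"
proof -
  have "6\<^sup>2 \<le> (hh n)\<^sup>2" using hh_ge by (intro power_mono) auto
  moreover have "(1::real) \<le> 2 ^ n" by simp
  ultimately have "6\<^sup>2 * 1 \<le> (hh n)\<^sup>2 * 2 ^ n" by (intro mult_mono) auto
  then show ?thesis unfolding aa_def by simp
qed
lemma hh_sq: "(hh n)\<^sup>2 / aa n = (1/2) ^ n"
  unfolding aa_def using hh_pos[of n] by (simp add: field_simps power_divide)

lemma hh_mono: "hh n \<le> hh (Suc n)"
proof -
  have u: "uu n \<le> uu (Suc n)" unfolding uu_def by simp
  have "KK n \<le> KK (Suc n)" unfolding KK_def using u uu_ge[of n]
    by (intro add_right_mono mult_mono power_mono) auto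
  then have "EE n \<le> EE (Suc n)" unfolding EE_def by simp
  then show ?thesis unfolding hh_def using u uu_ge[of n] EE_gt[of n]
    by (intro mult_mono) auto
qed

lemma aa_step: "aa n + 1 \<le> aa (Suc n)"
proof -
  have "(hh n)\<^sup>2 \<le> (hh (Suc n))\<^sup>2" using hh_mono hh_pos[of n] by (intro power_mono) auto
  then have "(hh n)\<^sup>2 * 2 ^ n * 2 \<le> (hh (Suc n))\<^sup>2 * 2 ^ n * 2" by simp
  then have "2 * aa n \<le> aa (Suc n)" unfolding aa_def by (simp add: field_simps)
  then show ?thesis using aa_ge[of n] by simp
qed

lemma aa_mono: "incseq aa"
proof (rule incseq_SucI)
  fix n show "aa n \<le> aa (Suc n)" using aa_step[of n] by linarith
qed

lemma aa_lt: "n < m \<Longrightarrow> aa n + 1 \<le> aa m"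
  using aa_step[of n] aa_mono[THEN monoD, of "Suc n" m] by simp

lemma PP_disj: "x \<in> PP n \<Longrightarrow> x \<in> PP m \<Longrightarrow> n = m"
proof (rule ccontr)
  assume x: "x \<in> PP n" "x \<in> PP m" and nm: "n \<noteq> m"
  show False
  proof (cases "n < m")
    case True then show False using aa_lt[OF True] x unfolding PP_def by auto
  next
    case False then have "m < n" using nm by simp
    then show False using aa_lt[of m n] x unfolding PP_def by auto
  qed
qed

lemma bb1_in: "x \<in> PP n \<Longrightarrow> bb1 x = hh n"
proof -
  assume x: "x \<in> PP n"
  have eq: "(\<lambda>m. hh m * indicator (PP m) x) = (\<lambda>m. if m = n then hh m else 0)"
  proof (rule ext)
    fix m show "hh m * indicator (PP m) x = (if m = n then hh m else 0)"
    proof (cases "m = n")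
      case True then show ?thesis using x by simp
    next
      case False then have "x \<notin> PP m" using PP_disj[OF x] by blast
      then show ?thesis using False by simp
    qed
  qed
  have "(\<lambda>m. hh m * indicator (PP m) x) sums hh n" unfolding eq by (rule sums_single)
  then show ?thesis unfolding bb1_def by (rule sums_unique[symmetric])
qed

lemma bb1_out: "(\<forall>n. x \<notin> PP n) \<Longrightarrow> bb1 x = 0"
proof -
  assume x: "\<forall>n. x \<notin> PP n"
  have eq: "(\<lambda>m. hh m * indicator (PP m) x) = (\<lambda>m. 0)" using x by (intro ext) simp
  show ?thesis unfolding bb1_def eq by simp
qed

lemma bb1_cases: "bb1 x = 0 \<or> (\<exists>n. x \<in> PP n \<and> bb1 x = hh n)"
proof (cases "\<exists>n. x \<in> PP n")
  case True then show ?thesis using bb1_in by blast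
next
  case False then show ?thesis using bb1_out by blast
qed

lemma PP_ge: "x \<in> PP n \<Longrightarrow> aa n \<le> x" unfolding PP_def by simp

lemma bb1_small: "x < 36 \<Longrightarrow> bb1 x = 0"
proof -
  assume x: "x < 36"
  { fix n assume "x \<in> PP n"
    then have "aa n \<le> x" by (rule PP_ge)
    then have False using aa_ge[of n] x by linarith }
  then show ?thesis using bb1_cases[of x] by blast
qed

lemma bb1_nonneg: "0 \<le> bb1 x"
  using bb1_cases[of x] hh_pos by (auto intro: less_imp_le)

lemma bb1_sq: "(bb1 x)\<^sup>2 \<le> \<bar>x\<bar>"
proof (cases "bb1 x = 0")
  case False
  then obtain n where n: "x \<in> PP n" "bb1 x = hh n" using bb1_cases by blast
  have "(hh n)\<^sup>2 * 1 \<le> (hh n)\<^sup>2 * 2 ^ n" by (intro mult_left_mono) auto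
  also have "\<dots> \<le> x" using PP_ge[OF n(1)] unfolding aa_def .
  finally show ?thesis using n by simp
qed simp

lemma PP_meas[measurable]: "PP n \<in> sets borel" unfolding PP_def by simp

lemma bb1_meas[measurable]: "bb1 \<in> borel_measurable borel"
  unfolding bb1_def[abs_def] by measurable

lemma bb2_meas[measurable]: "bb2 \<in> borel_measurable borel"
  unfolding bb2_def[abs_def] by measurable

lemma bb12: "bb1 x * bb2 x = 0"
  using bb1_small[of x] unfolding bb2_def by (cases "x \<le> 0") auto



lemma hilbert_zero: "hilbert (\<lambda>y. 0) x = 0"
  using hilbert_far[of x "\<lambda>y. 0"] by simp

lemma comm_eq:
  "commutator bb2 (commutator bb1 hilbert) f x
     = - bb2 x * hilbert (\<lambda>y. bb1 y * f y) x - bb1 x * hilbert (\<lambda>y. bb2 y * f y) x"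
proof -
  have z: "(\<lambda>y. bb1 y * (bb2 y * f y)) = (\<lambda>y. 0)"
  proof
    fix y show "bb1 y * (bb2 y * f y) = 0" using bb12[of y] by (metis mult.assoc mult_zero_left)
  qed
  have b: "bb2 x * bb1 x = 0" using bb12[of x] by (simp add: mult.commute)
  show ?thesis unfolding commutator_def z hilbert_zero
    using bb12[of x] by (auto simp: algebra_simps)
qed

lemma ennreal_div_split: "0 \<le> (a::real) \<Longrightarrow> 0 \<le> c \<Longrightarrow> ennreal (a / c) = ennreal a * ennreal (1 / c)"
  by (subst ennreal_mult[symmetric]) auto

lemma ennreal_le_suminf: "f n \<le> (\<Sum>i. f i :: ennreal)"
  using sum_le_suminf[of f "{n}"] by simp

lemma CS_int:
  fixes u f :: "real \<Rightarrow> real"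
  assumes [measurable]: "u \<in> borel_measurable borel" "f \<in> borel_measurable borel"
  shows "ennreal ((LINT y|lborel. u y * f y)\<^sup>2)
     \<le> (\<integral>\<^sup>+ y. ennreal ((u y)\<^sup>2) \<partial>lborel) * (\<integral>\<^sup>+ y. ennreal ((f y)\<^sup>2) \<partial>lborel)"
proof (cases "integrable lborel (\<lambda>y. u y * f y)")
  case True
  let ?z = "LINT y|lborel. u y * f y"
  have "ennreal \<bar>?z\<bar> \<le> (\<integral>\<^sup>+ y. ennreal (norm (u y * f y)) \<partial>lborel)"
    using integral_norm_bound_ennreal[OF True] by simp
  also have "\<dots> = (\<integral>\<^sup>+ y. ennreal \<bar>u y\<bar> * ennreal \<bar>f y\<bar> \<partial>lborel)"
    by (intro nn_integral_cong) (simp add: abs_mult ennreal_mult)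
  finally have 1: "ennreal \<bar>?z\<bar> \<le> (\<integral>\<^sup>+ y. ennreal \<bar>u y\<bar> * ennreal \<bar>f y\<bar> \<partial>lborel)" .
  have "ennreal (?z\<^sup>2) = (ennreal \<bar>?z\<bar>)\<^sup>2" by (simp add: ennreal_power)
  also have "\<dots> \<le> (\<integral>\<^sup>+ y. ennreal \<bar>u y\<bar> * ennreal \<bar>f y\<bar> \<partial>lborel)\<^sup>2"
    using 1 by (intro power_mono) auto
  also have "\<dots> \<le> (\<integral>\<^sup>+ y. (ennreal \<bar>u y\<bar>)\<^sup>2 \<partial>lborel) * (\<integral>\<^sup>+ y. (ennreal \<bar>f y\<bar>)\<^sup>2 \<partial>lborel)"
    by (rule Cauchy_Schwarz_nn_integral) measurable
  also have "\<dots> = (\<integral>\<^sup>+ y. ennreal ((u y)\<^sup>2) \<partial>lborel) * (\<integral>\<^sup>+ y. ennreal ((f y)\<^sup>2) \<partial>lborel)"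
    by (simp add: ennreal_power)
  finally show ?thesis .
next
  case False
  then show ?thesis by (simp add: not_integrable_integral_eq)
qed

definition Hfun :: "real \<Rightarrow> ennreal" where
  "Hfun x = indicator {..0} x * (\<Sum>n. ennreal ((hh n)\<^sup>2 / (aa n - x)\<^sup>2))
          + (\<Sum>n. ennreal ((1/2) ^ n) * indicator (PP n) x)"

lemma Hfun_meas[measurable]: "Hfun \<in> borel_measurable borel"
  unfolding Hfun_def[abs_def] by measurable

lemma W_bound:
  assumes x: "x \<le> 0"
  shows "(\<integral>\<^sup>+ y. ennreal ((bb1 y / (x - y))\<^sup>2) \<partial>lborel) \<le> (\<Sum>n. ennreal ((hh n)\<^sup>2 / (aa n - x)\<^sup>2))"
proof -
  have "(\<integral>\<^sup>+ y. ennreal ((bb1 y / (x - y))\<^sup>2) \<partial>lborel)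
      \<le> (\<integral>\<^sup>+ y. (\<Sum>n. ennreal ((hh n)\<^sup>2 / (aa n - x)\<^sup>2) * indicator (PP n) y) \<partial>lborel)"
  proof (intro nn_integral_mono)
    fix y
    show "ennreal ((bb1 y / (x - y))\<^sup>2) \<le> (\<Sum>n. ennreal ((hh n)\<^sup>2 / (aa n - x)\<^sup>2) * indicator (PP n) y)"
    proof (cases "bb1 y = 0")
      case False
      then obtain n where n: "y \<in> PP n" "bb1 y = hh n" using bb1_cases by blast
      have ay: "aa n \<le> y" using PP_ge[OF n(1)] .
      have pos: "0 < aa n - x" using aa_ge[of n] x by linarith
      have "(bb1 y / (x - y))\<^sup>2 = (hh n)\<^sup>2 / (y - x)\<^sup>2" using n(2) by (simp add: power_divide power2_commute)
      also have "\<dots> \<le> (hh n)\<^sup>2 / (aa n - x)\<^sup>2"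
        using pos ay by (intro divide_left_mono power_mono mult_pos_pos) auto
      finally have "ennreal ((bb1 y / (x - y))\<^sup>2) \<le> ennreal ((hh n)\<^sup>2 / (aa n - x)\<^sup>2) * indicator (PP n) y"
        using n(1) by (simp add: ennreal_leI)
      also have "\<dots> \<le> (\<Sum>n. ennreal ((hh n)\<^sup>2 / (aa n - x)\<^sup>2) * indicator (PP n) y)"
        by (rule ennreal_le_suminf)
      finally show ?thesis .
    qed simp
  qed
  also have "\<dots> = (\<Sum>n. (\<integral>\<^sup>+ y. ennreal ((hh n)\<^sup>2 / (aa n - x)\<^sup>2) * indicator (PP n) y \<partial>lborel))"
    by (rule nn_integral_suminf) measurable
  also have "\<dots> = (\<Sum>n. ennreal ((hh n)\<^sup>2 / (aa n - x)\<^sup>2))"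
    by (simp add: nn_integral_cmult_indicator PP_def)
  finally show ?thesis .
qed


lemma point_bound:
  assumes fm[measurable]: "f \<in> borel_measurable borel"
  shows "ennreal ((commutator bb2 (commutator bb1 hilbert) f x)\<^sup>2)
     \<le> Hfun x * (\<integral>\<^sup>+ y. ennreal ((f y)\<^sup>2) \<partial>lborel)"
proof (cases "x \<le> 0")
  case True
  have b1x: "bb1 x = 0" using bb1_small True by simp
  have b2x: "bb2 x = 1" using True unfolding bb2_def by simp
  have "hilbert (\<lambda>y. bb1 y * f y) x = (LINT y|lborel. bb1 y * f y / (x - y))"
  proof (rule hilbert_far)
    fix y assume "\<bar>x - y\<bar> < 1" then have "y < 36" using True by linarith
    then show "bb1 y * f y = 0" using bb1_small by simp
  qed
  also have "\<dots> = (LINT y|lborel. (bb1 y / (x - y)) * f y)" by (simp add: field_simps)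
  finally have hv: "hilbert (\<lambda>y. bb1 y * f y) x = (LINT y|lborel. (bb1 y / (x - y)) * f y)" .
  have "ennreal ((commutator bb2 (commutator bb1 hilbert) f x)\<^sup>2)
      = ennreal ((LINT y|lborel. (bb1 y / (x - y)) * f y)\<^sup>2)"
    unfolding comm_eq b1x b2x hv by simp
  also have "\<dots> \<le> (\<integral>\<^sup>+ y. ennreal ((bb1 y / (x - y))\<^sup>2) \<partial>lborel) * (\<integral>\<^sup>+ y. ennreal ((f y)\<^sup>2) \<partial>lborel)"
    by (rule CS_int) measurable
  also have "\<dots> \<le> (\<Sum>n. ennreal ((hh n)\<^sup>2 / (aa n - x)\<^sup>2)) * (\<integral>\<^sup>+ y. ennreal ((f y)\<^sup>2) \<partial>lborel)"
    by (intro mult_right_mono W_bound[OF True]) auto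
  also have "\<dots> \<le> Hfun x * (\<integral>\<^sup>+ y. ennreal ((f y)\<^sup>2) \<partial>lborel)"
    unfolding Hfun_def using True by (intro mult_right_mono) auto
  finally show ?thesis .
next
  case False
  have b2x: "bb2 x = 0" using False unfolding bb2_def by simp
  show ?thesis
  proof (cases "bb1 x = 0")
    case True
    then show ?thesis unfolding comm_eq b2x by simp
  next
    case nz: False
    then obtain n where n: "x \<in> PP n" "bb1 x = hh n" using bb1_cases by blast
    have ax: "aa n \<le> x" using PP_ge[OF n(1)] .
    have x36: "36 \<le> x" using aa_ge[of n] ax by linarith
    have "hilbert (\<lambda>y. bb2 y * f y) x = (LINT y|lborel. bb2 y * f y / (x - y))"
    proof (rule hilbert_far)
      fix y assume "\<bar>x - y\<bar> < 1" then have "0 < y" using x36 by linarith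
      then show "bb2 y * f y = 0" unfolding bb2_def by simp
    qed
    also have "\<dots> = (LINT y|lborel. (bb2 y / (x - y)) * f y)" by (simp add: field_simps)
    finally have hv: "hilbert (\<lambda>y. bb2 y * f y) x = (LINT y|lborel. (bb2 y / (x - y)) * f y)" .
    have V: "(\<integral>\<^sup>+ y. ennreal ((bb2 y / (x - y))\<^sup>2) \<partial>lborel) = ennreal (1 / x)"
    proof -
      have "(\<integral>\<^sup>+ y. ennreal ((bb2 y / (x - y))\<^sup>2) \<partial>lborel)
          = (\<integral>\<^sup>+ y. ennreal (1 / (x - y)\<^sup>2) * indicator {..0} y \<partial>lborel)"
        by (intro nn_integral_cong) (auto simp: bb2_def indicator_def power_divide)
      also have "\<dots> = ennreal (1 / x)" using x36 by (intro refl_int) simp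
      finally show ?thesis .
    qed
    have "ennreal ((commutator bb2 (commutator bb1 hilbert) f x)\<^sup>2)
        = ennreal ((hh n)\<^sup>2) * ennreal ((LINT y|lborel. (bb2 y / (x - y)) * f y)\<^sup>2)"
      unfolding comm_eq b2x hv n(2) by (simp add: ennreal_mult[symmetric] power_mult_distrib)
    also have "\<dots> \<le> ennreal ((hh n)\<^sup>2) * ((\<integral>\<^sup>+ y. ennreal ((bb2 y / (x - y))\<^sup>2) \<partial>lborel) * (\<integral>\<^sup>+ y. ennreal ((f y)\<^sup>2) \<partial>lborel))"
    proof -
      have m2: "(\<lambda>y. bb2 y / (x - y)) \<in> borel_measurable borel" by measurable
      show ?thesis by (intro mult_left_mono CS_int m2 fm) simp
    qed
    also have "\<dots> = ennreal ((hh n)\<^sup>2 / x) * (\<integral>\<^sup>+ y. ennreal ((f y)\<^sup>2) \<partial>lborel)"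
    proof -
      have "ennreal ((hh n)\<^sup>2 / x) = ennreal ((hh n)\<^sup>2) * ennreal (1 / x)"
        using x36 by (intro ennreal_div_split) auto
      then show ?thesis unfolding V by (simp only: mult.assoc)
    qed
    also have "\<dots> \<le> ennreal ((1/2) ^ n) * (\<integral>\<^sup>+ y. ennreal ((f y)\<^sup>2) \<partial>lborel)"
    proof (intro mult_right_mono ennreal_leI)
      have "(hh n)\<^sup>2 / x \<le> (hh n)\<^sup>2 / aa n" using ax aa_ge[of n] by (intro divide_left_mono) auto
      then show "(hh n)\<^sup>2 / x \<le> (1/2) ^ n" using hh_sq by simp
    qed simp
    also have "\<dots> \<le> Hfun x * (\<integral>\<^sup>+ y. ennreal ((f y)\<^sup>2) \<partial>lborel)"
    proof (intro mult_right_mono)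
      have "ennreal ((1/2) ^ n) = ennreal ((1/2) ^ n) * indicator (PP n) x" using n(1) by simp
      also have "\<dots> \<le> (\<Sum>n. ennreal ((1/2) ^ n) * indicator (PP n) x)" by (rule ennreal_le_suminf)
      also have "\<dots> \<le> Hfun x" unfolding Hfun_def by simp
      finally show "ennreal ((1/2) ^ n) \<le> Hfun x" .
    qed simp
    finally show ?thesis .
  qed
qed

lemma geom_ennreal: "(\<Sum>n. ennreal ((1/2) ^ n)) = 2"
proof -
  have "(\<Sum>n. ennreal ((1/2) ^ n)) = ennreal (\<Sum>n. (1/2::real) ^ n)"
    by (rule suminf_ennreal2) (auto intro: summable_geometric)
  also have "(\<Sum>n. (1/2::real) ^ n) = 2" using suminf_geometric[of "1/2::real"] by simp
  finally show ?thesis by simp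
qed

lemma Hfun_int: "(\<integral>\<^sup>+ x. Hfun x \<partial>lborel) = 4"
proof -
  have 1: "(\<integral>\<^sup>+ x. indicator {..0} x * (\<Sum>n. ennreal ((hh n)\<^sup>2 / (aa n - x)\<^sup>2)) \<partial>lborel) = 2"
  proof -
    have "(\<integral>\<^sup>+ x. indicator {..0} x * (\<Sum>n. ennreal ((hh n)\<^sup>2 / (aa n - x)\<^sup>2)) \<partial>lborel)
        = (\<integral>\<^sup>+ x. (\<Sum>n. ennreal ((hh n)\<^sup>2) * (ennreal (1 / (aa n - x)\<^sup>2) * indicator {..0} x)) \<partial>lborel)"
    proof (intro nn_integral_cong)
      fix x :: real
      have "indicator {..0} x * (\<Sum>n. ennreal ((hh n)\<^sup>2 / (aa n - x)\<^sup>2))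
          = (\<Sum>n. ennreal ((hh n)\<^sup>2 / (aa n - x)\<^sup>2) * indicator {..0} x)"
        by (simp add: mult.commute)
      also have "\<dots> = (\<Sum>n. ennreal ((hh n)\<^sup>2) * (ennreal (1 / (aa n - x)\<^sup>2) * indicator {..0} x))"
      proof (intro suminf_cong)
        fix n
        have "ennreal ((hh n)\<^sup>2 / (aa n - x)\<^sup>2) = ennreal ((hh n)\<^sup>2) * ennreal (1 / (aa n - x)\<^sup>2)"
          by (intro ennreal_div_split) auto
        then show "ennreal ((hh n)\<^sup>2 / (aa n - x)\<^sup>2) * indicator {..0} x
            = ennreal ((hh n)\<^sup>2) * (ennreal (1 / (aa n - x)\<^sup>2) * indicator {..0} x)"
          by (simp only: mult.assoc)
      qed
      finally show "indicator {..0} x * (\<Sum>n. ennreal ((hh n)\<^sup>2 / (aa n - x)\<^sup>2))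
          = (\<Sum>n. ennreal ((hh n)\<^sup>2) * (ennreal (1 / (aa n - x)\<^sup>2) * indicator {..0} x))" .
    qed
    also have "\<dots> = (\<Sum>n. (\<integral>\<^sup>+ x. ennreal ((hh n)\<^sup>2) * (ennreal (1 / (aa n - x)\<^sup>2) * indicator {..0} x) \<partial>lborel))"
      by (rule nn_integral_suminf) measurable
    also have "\<dots> = (\<Sum>n. ennreal ((hh n)\<^sup>2) * ennreal (1 / aa n))"
    proof (intro suminf_cong)
      fix n
      have "(\<integral>\<^sup>+ x. ennreal ((hh n)\<^sup>2) * (ennreal (1 / (aa n - x)\<^sup>2) * indicator {..0} x) \<partial>lborel)
          = ennreal ((hh n)\<^sup>2) * (\<integral>\<^sup>+ x. ennreal (1 / (aa n - x)\<^sup>2) * indicator {..0} x \<partial>lborel)"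
        by (rule nn_integral_cmult) measurable
      also have "\<dots> = ennreal ((hh n)\<^sup>2) * ennreal (1 / aa n)"
        using aa_ge[of n] by (subst refl_int) auto
      finally show "(\<integral>\<^sup>+ x. ennreal ((hh n)\<^sup>2) * (ennreal (1 / (aa n - x)\<^sup>2) * indicator {..0} x) \<partial>lborel)
          = ennreal ((hh n)\<^sup>2) * ennreal (1 / aa n)" .
    qed
    also have "\<dots> = (\<Sum>n. ennreal ((1/2) ^ n))"
    proof (intro suminf_cong)
      fix n
      have "ennreal ((hh n)\<^sup>2 / aa n) = ennreal ((hh n)\<^sup>2) * ennreal (1 / aa n)"
        using aa_ge[of n] by (intro ennreal_div_split) auto
      then show "ennreal ((hh n)\<^sup>2) * ennreal (1 / aa n) = ennreal ((1/2) ^ n)"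
        using hh_sq[of n] by simp
    qed
    finally show ?thesis using geom_ennreal by simp
  qed
  have 2: "(\<integral>\<^sup>+ x. (\<Sum>n. ennreal ((1/2) ^ n) * indicator (PP n) x) \<partial>lborel) = 2"
  proof -
    have "(\<integral>\<^sup>+ x. (\<Sum>n. ennreal ((1/2) ^ n) * indicator (PP n) x) \<partial>lborel)
        = (\<Sum>n. (\<integral>\<^sup>+ x. ennreal ((1/2) ^ n) * indicator (PP n) x \<partial>lborel))"
      by (rule nn_integral_suminf) measurable
    also have "\<dots> = (\<Sum>n. ennreal ((1/2) ^ n))"
      by (simp add: nn_integral_cmult_indicator PP_def)
    finally show ?thesis using geom_ennreal by simp
  qed
  have "(\<integral>\<^sup>+ x. Hfun x \<partial>lborel)
      = (\<integral>\<^sup>+ x. indicator {..0} x * (\<Sum>n. ennreal ((hh n)\<^sup>2 / (aa n - x)\<^sup>2)) \<partial>lborel)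
        + (\<integral>\<^sup>+ x. (\<Sum>n. ennreal ((1/2) ^ n) * indicator (PP n) x) \<partial>lborel)"
    unfolding Hfun_def by (rule nn_integral_add) measurable
  then show ?thesis using 1 2 by simp
qed

lemma e4: "(4::ennreal) = ennreal (2\<^sup>2)"
  by (simp add: power2_eq_square)

lemma L2_bdd: "L2_bounded_on_Linf_c (commutator bb2 (commutator bb1 hilbert))"
  unfolding L2_bounded_on_Linf_c_def
proof (intro exI[of _ 2] conjI allI impI)
  fix f assume "Linf_c f"
  then have fm[measurable]: "f \<in> borel_measurable borel" unfolding Linf_c_def by simp
  have "(\<integral>\<^sup>+ x. ennreal ((commutator bb2 (commutator bb1 hilbert) f x)\<^sup>2) \<partial>lborel)
      \<le> (\<integral>\<^sup>+ x. Hfun x * (\<integral>\<^sup>+ y. ennreal ((f y)\<^sup>2) \<partial>lborel) \<partial>lborel)"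
    by (intro nn_integral_mono point_bound fm)
  also have "\<dots> = (\<integral>\<^sup>+ x. Hfun x \<partial>lborel) * (\<integral>\<^sup>+ y. ennreal ((f y)\<^sup>2) \<partial>lborel)"
    by (rule nn_integral_multc) measurable
  also have "\<dots> = ennreal (2\<^sup>2) * (\<integral>\<^sup>+ y. ennreal ((f y)\<^sup>2) \<partial>lborel)"
    unfolding Hfun_int e4 ..
  finally show "(\<integral>\<^sup>+ x. ennreal ((commutator bb2 (commutator bb1 hilbert) f x)\<^sup>2) \<partial>lborel)
      \<le> ennreal (2\<^sup>2) * (\<integral>\<^sup>+ y. ennreal ((f y)\<^sup>2) \<partial>lborel)" .
qed simp



lemma Linf_loc_bb1: "Linf_loc bb1"
  unfolding Linf_loc_def
proof (intro conjI allI impI)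
  show "bb1 \<in> borel_measurable lborel" by simp
  fix K :: "real set" assume "compact K"
  then have "bounded K" by (rule compact_imp_bounded)
  then obtain R where R: "\<forall>x\<in>K. \<bar>x\<bar> \<le> R" unfolding bounded_iff by auto
  have "\<bar>bb1 x\<bar> \<le> 1 + R" if x: "x \<in> K" for x
  proof (cases "bb1 x \<le> 1")
    case True then show ?thesis using bb1_nonneg[of x] R x by force
  next
    case False
    then have "bb1 x * 1 \<le> bb1 x * bb1 x" by (intro mult_left_mono) auto
    then have "bb1 x \<le> \<bar>x\<bar>" using bb1_sq[of x] by (simp add: power2_eq_square)
    then show ?thesis using bb1_nonneg[of x] R x by force
  qed
  then show "\<exists>M. AE x in lborel. x \<in> K \<longrightarrow> \<bar>bb1 x\<bar> \<le> M" by (intro exI[of _ "1 + R"] AE_I2) auto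
qed

lemma Linf_loc_bb2: "Linf_loc bb2"
  unfolding Linf_loc_def
proof (intro conjI allI impI)
  show "bb2 \<in> borel_measurable lborel" by simp
  fix K :: "real set"
  show "\<exists>M. AE x in lborel. x \<in> K \<longrightarrow> \<bar>bb2 x\<bar> \<le> M"
    by (intro exI[of _ 1] AE_I2) (simp add: bb2_def indicator_def)
qed

lemma avg_bb2:
  assumes A: "1 \<le> A"
  shows "avg bb2 (-A) (A + 1) = A / (2 * A + 1)"
proof -
  have "(LINT x:{-A..A+1}|lborel. bb2 x) = (LINT x|lborel. indicator {-A..0} x)"
    unfolding set_lebesgue_integral_def bb2_def
    by (intro Bochner_Integration.integral_cong) (auto simp: indicator_def)
  also have "\<dots> = A" using A by simp
  finally show ?thesis unfolding avg_def by simp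
qed

lemma bb2_dev:
  assumes A: "1 \<le> A"
  shows "1/3 \<le> \<bar>bb2 x - avg bb2 (-A) (A + 1)\<bar>"
proof -
  have c1: "1/3 \<le> A / (2 * A + 1)" using A by (simp add: field_simps)
  have c2: "A / (2 * A + 1) \<le> 1/2" using A by (simp add: field_simps)
  show ?thesis
  proof (cases "x \<le> 0")
    case True
    then have "bb2 x = 1" unfolding bb2_def by simp
    moreover have d: "1/3 \<le> 1 - A / (2 * A + 1)" using c2 by linarith
    ultimately show ?thesis unfolding avg_bb2[OF A] using order_trans[OF d abs_ge_self] by simp
  next
    case False
    then have "bb2 x = 0" unfolding bb2_def by simp
    moreover have "\<bar>0 - A / (2 * A + 1)\<bar> = A / (2 * A + 1)" using A by simp
    ultimately show ?thesis unfolding avg_bb2[OF A] using c1 by simp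
  qed
qed

lemma bb1_dev:
  "\<exists>G. G \<in> sets lborel \<and> G \<subseteq> {- aa n..aa n + 1} \<and> emeasure lborel G = ennreal 1 \<and>
       (\<forall>x\<in>G. hh n / 2 \<le> \<bar>bb1 x - c\<bar>)"
proof (cases "c \<le> hh n / 2")
  case True
  show ?thesis
  proof (intro exI[of _ "PP n"] conjI ballI)
    show "PP n \<in> sets lborel" by simp
    show "PP n \<subseteq> {- aa n..aa n + 1}" unfolding PP_def using aa_ge[of n] by auto
    show "emeasure lborel (PP n) = ennreal 1" unfolding PP_def by simp
    fix x assume "x \<in> PP n"
    then have "bb1 x = hh n" by (rule bb1_in)
    moreover have "hh n / 2 \<le> hh n - c" using True by simp
    ultimately show "hh n / 2 \<le> \<bar>bb1 x - c\<bar>" using abs_ge_self[of "hh n - c"] by linarith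
  qed
next
  case False
  show ?thesis
  proof (intro exI[of _ "{- aa n..- aa n + 1}"] conjI ballI)
    show "{- aa n..- aa n + 1} \<in> sets lborel" by simp
    show "{- aa n..- aa n + 1} \<subseteq> {- aa n..aa n + 1}" using aa_ge[of n] by auto
    show "emeasure lborel {- aa n..- aa n + 1} = ennreal 1" by simp
    fix x assume "x \<in> {- aa n..- aa n + 1}"
    then have "x < 36" using aa_ge[of n] by auto
    then show "hh n / 2 \<le> \<bar>bb1 x - c\<bar>" using bb1_small False by auto
  qed
qed

lemma hh_eq: "hh n / 2 * (1/3) = uu n * EE n" unfolding hh_def by simp

lemma big: "2 * aa n + 1 < (EE n)\<^sup>2 * ln (exp 1 + EE n)"
proof -
  have E1: "1 < EE n" by (rule EE_gt)
  have "KK n = ln (EE n)" unfolding EE_def by simp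
  also have "\<dots> \<le> ln (exp 1 + EE n)" using E1 by (subst ln_le_cancel_iff) (auto intro: add_pos_pos)
  finally have L: "KK n \<le> ln (exp 1 + EE n)" .
  have "2 * aa n + 1 = (EE n)\<^sup>2 * (72 * (uu n)\<^sup>2 * 2 ^ n) + 1"
    unfolding aa_def hh_def by (simp add: power_mult_distrib)
  also have "\<dots> < (EE n)\<^sup>2 * (72 * (uu n)\<^sup>2 * 2 ^ n) + (EE n)\<^sup>2"
    using E1 by (simp add: one_less_power)
  also have "\<dots> = (EE n)\<^sup>2 * KK n" unfolding KK_def by (simp add: algebra_simps)
  also have "\<dots> \<le> (EE n)\<^sup>2 * ln (exp 1 + EE n)" using L by (intro mult_left_mono) auto
  finally show ?thesis .
qed

lemma T_lower:
  assumes C: "log_bump C" "B2 (young_conj C)"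
  shows "ereal (uu n) \<le> T_C C bb1 bb2"
proof -
  let ?a = "- aa n" and ?b = "aa n + 1"
  have A1: "1 \<le> aa n" using aa_ge[of n] by simp
  obtain G where G: "G \<in> sets lborel" "G \<subseteq> {?a..?b}" "emeasure lborel G = ennreal 1"
    and Gd: "\<forall>x\<in>G. hh n / 2 \<le> \<bar>bb1 x - avg bb1 ?a ?b\<bar>"
    using bb1_dev[of n "avg bb1 ?a ?b"] by blast
  have up: "uu n > 0" using uu_ge[of n] by simp
  have "ereal (uu n) \<le> orlicz_avg C (\<lambda>x. \<bar>bb1 x - avg bb1 ?a ?b\<bar> * \<bar>bb2 x - avg bb2 ?a ?b\<bar>) ?a ?b"
  proof (rule orlicz_lower[OF bump_lower[OF C] G])
    show "\<forall>x\<in>G. uu n * EE n \<le> \<bar>\<bar>bb1 x - avg bb1 ?a ?b\<bar> * \<bar>bb2 x - avg bb2 ?a ?b\<bar>\<bar>"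
    proof
      fix x assume "x \<in> G"
      then have "hh n / 2 * (1/3) \<le> \<bar>bb1 x - avg bb1 ?a ?b\<bar> * \<bar>bb2 x - avg bb2 ?a ?b\<bar>"
        using Gd bb2_dev[OF A1, of x] hh_pos[of n] by (intro mult_mono) auto
      then show "uu n * EE n \<le> \<bar>\<bar>bb1 x - avg bb1 ?a ?b\<bar> * \<bar>bb2 x - avg bb2 ?a ?b\<bar>\<bar>"
        unfolding hh_eq by simp
    qed
    show "uu n \<le> uu n * EE n" using up EE_gt[of n] by simp
    show "?b - ?a < (uu n * EE n / uu n)\<^sup>2 * ln (exp 1 + uu n * EE n / uu n) * 1"
      using big[of n] up by simp
  qed (use up A1 in auto)
  also have "\<dots> \<le> T_C C bb1 bb2"
    unfolding T_C_def using A1 by (intro SUP_upper2[of "(?a, ?b)"]) auto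
  finally show ?thesis .
qed

lemma S_lower:
  assumes A: "log_bump A" "B2 (young_conj A)" and B: "log_bump B" "B2 (young_conj B)"
  shows "ereal (uu n / 6) \<le> S_AB A B bb1 bb2"
proof -
  let ?a = "- aa n" and ?b = "aa n + 1"
  have A1: "1 \<le> aa n" using aa_ge[of n] by simp
  obtain G where G: "G \<in> sets lborel" "G \<subseteq> {?a..?b}" "emeasure lborel G = ennreal 1"
    and Gd: "\<forall>x\<in>G. hh n / 2 \<le> \<bar>bb1 x - avg bb1 ?a ?b\<bar>"
    using bb1_dev[of n "avg bb1 ?a ?b"] by blast
  have up: "uu n > 0" using uu_ge[of n] by simp
  have E1: "1 < EE n" by (rule EE_gt)
  have h2: "hh n / 2 = 3 * uu n * EE n" unfolding hh_def by simp
  have 1: "ereal (uu n) \<le> orlicz_avg A (\<lambda>x. bb1 x - avg bb1 ?a ?b) ?a ?b"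
  proof (rule orlicz_lower[OF bump_lower[OF A] G])
    show "\<forall>x\<in>G. 3 * uu n * EE n \<le> \<bar>bb1 x - avg bb1 ?a ?b\<bar>" using Gd h2 by simp
    show "uu n \<le> 3 * uu n * EE n" using up E1 by simp
    have "(EE n)\<^sup>2 * ln (exp 1 + EE n) \<le> (3 * EE n)\<^sup>2 * ln (exp 1 + 3 * EE n)"
      using E1 by (intro phi_mono) auto
    then show "?b - ?a < (3 * uu n * EE n / uu n)\<^sup>2 * ln (exp 1 + 3 * uu n * EE n / uu n) * 1"
      using big[of n] up by simp
  qed (use up A1 in auto)
  have 2: "ereal (1/6) \<le> orlicz_avg B (\<lambda>x. bb2 x - avg bb2 ?a ?b) ?a ?b"
  proof (rule orlicz_lower[OF bump_lower[OF B], where G="{- aa n..aa n + 1}" and \<mu>="2 * aa n + 1" and m="1/3" and M="1/6"])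
    show "emeasure lborel {?a..?b} = ennreal (2 * aa n + 1)" using A1 by simp
    show "\<forall>x\<in>{?a..?b}. 1/3 \<le> \<bar>bb2 x - avg bb2 ?a ?b\<bar>" using bb2_dev[OF A1] by simp
    have "1 \<le> ln (exp 1 + (2::real))" by (rule ln_e_ge1) simp
    then show "?b - ?a < ((1/3) / (1/6))\<^sup>2 * ln (exp 1 + (1/3) / (1/6)) * (2 * aa n + 1)"
      using A1 by simp
  qed (use A1 in auto)
  have "ereal (uu n / 6) = ereal (uu n) * ereal (1/6)" by simp
  also have "\<dots> \<le> orlicz_avg A (\<lambda>x. bb1 x - avg bb1 ?a ?b) ?a ?b * orlicz_avg B (\<lambda>x. bb2 x - avg bb2 ?a ?b) ?a ?b"
    using 1 2 up by (intro ereal_mult_mono) (auto intro: order_trans[OF _ 1])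
  also have "\<dots> \<le> S_AB A B bb1 bb2"
    unfolding S_AB_def using A1 by (intro SUP_upper2[of "(?a, ?b)"]) auto
  finally show ?thesis .
qed

lemma uu_unbounded: "\<exists>n. r \<le> uu n"
proof -
  obtain n where "r \<le> real n" using real_arch_simple by blast
  then show ?thesis unfolding uu_def by (intro exI[of _ n]) simp
qed

theorem theorem4p7:
  shows "\<exists>b1 b2. Linf_loc b1 \<and> Linf_loc b2 \<and>
    L2_bounded_on_Linf_c (commutator b2 (commutator b1 hilbert)) \<and>
    (\<forall>A B. log_bump A \<and> log_bump B \<and> B2 (young_conj A) \<and> B2 (young_conj B)
       \<longrightarrow> S_AB A B b1 b2 = \<infinity>) \<and>
    (\<forall>C. log_bump C \<and> B2 (young_conj C) \<longrightarrow> T_C C b1 b2 = \<infinity>)"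
proof -
  have S: "\<forall>A B. log_bump A \<and> log_bump B \<and> B2 (young_conj A) \<and> B2 (young_conj B)
       \<longrightarrow> S_AB A B bb1 bb2 = \<infinity>"
  proof (intro allI impI)
    fix A B :: "real \<Rightarrow> real"
    assume H: "log_bump A \<and> log_bump B \<and> B2 (young_conj A) \<and> B2 (young_conj B)"
    show "S_AB A B bb1 bb2 = \<infinity>"
    proof (rule ereal_top)
      fix r :: real
      obtain n where n: "6 * r \<le> uu n" using uu_unbounded by blast
      have "ereal r \<le> ereal (uu n / 6)" using n by simp
      also have "\<dots> \<le> S_AB A B bb1 bb2" using H by (intro S_lower) auto
      finally show "ereal r \<le> S_AB A B bb1 bb2" .
    qed
  qed
  have T: "\<forall>C. log_bump C \<and> B2 (young_conj C) \<longrightarrow> T_C C bb1 bb2 = \<infinity>"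
  proof (intro allI impI)
    fix C :: "real \<Rightarrow> real"
    assume H: "log_bump C \<and> B2 (young_conj C)"
    show "T_C C bb1 bb2 = \<infinity>"
    proof (rule ereal_top)
      fix r :: real
      obtain n where n: "r \<le> uu n" using uu_unbounded by blast
      have "ereal r \<le> ereal (uu n)" using n by simp
      also have "\<dots> \<le> T_C C bb1 bb2" using H by (intro T_lower) auto
      finally show "ereal r \<le> T_C C bb1 bb2" .
    qed
  qed
  show ?thesis using Linf_loc_bb1 Linf_loc_bb2 L2_bdd S T by blast
qed

end
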